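(* Let $r\ge 1$ and let $K$ be a pure $r$-dimensional simplicial complex on $n$ vertices with $\beta_r(K)=t$, where $1\le t\le n-r-1$. Then $$\mathfrak{q}_{r-1}(K)\le rn-r^2+t+1.$$
   Context: A (finite abstract) simplicial complex $K$ on a finite vertex set $V(K)$ is a family of subsets of $V(K)$ closed under taking subsets and containing every singleton; it is on $n$ vertices if $|V(K)|=n$. An $i$-face is a member of cardinality $i+1$; $S_i(K)$ is the set of $i$-faces; facets are inclusion-maximal faces; $K$ is pure if all facets have the same dimension. $\beta_r(K)=\dim_{\mathbb R}H_r(K;\mathbb R)$ is the $r$-th Betti number (real simplicial homology). For an $i$-face $F$, $d_K(F)$ is the number of $(i+1)$-faces containing $F$; two distinct $i$-faces are up-neighbors if their union is an $(i+1)$-face. The signless up Laplacian $Q_i^{\mathrm{up}}(K)$ is the operator on $\mathbb{R}^{S_i(K)}$ given by $(Q_i^{\mathrm{up}}(K)f)(F)=d_K(F)f(F)+\sum_{F'\text{ up-neighbor of }F}f(F')$, and $\mathfrak{q}_i(K)$ is its largest eigenvalue. *)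

theory Defs
  imports "HOL-Analysis.Analysis" "HOL-Library.Function_Algebras"
begin

definition simplicial_complex :: "'a set \<Rightarrow> 'a set set \<Rightarrow> bool" where
  "simplicial_complex V K \<longleftrightarrow> finite V \<and> (\<forall>F\<in>K. F \<subseteq> V)
     \<and> (\<forall>F\<in>K. \<forall>G. G \<subseteq> F \<longrightarrow> G \<in> K) \<and> (\<forall>v\<in>V. {v} \<in> K)"

definition faces :: "'a set set \<Rightarrow> nat \<Rightarrow> 'a set set" where
  "faces K i = {F \<in> K. card F = Suc i}"

definition facets :: "'a set set \<Rightarrow> 'a set set" where
  "facets K = {F \<in> K. \<forall>G\<in>K. F \<subseteq> G \<longrightarrow> G = F}"

definition pure_dim :: "'a set set \<Rightarrow> nat \<Rightarrow> bool" where
  "pure_dim K r \<longleftrightarrow> faces K r \<noteq> {} \<and> (\<forall>F\<in>facets K. card F = Suc r)"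

definition chains :: "'a set set \<Rightarrow> nat \<Rightarrow> ('a set \<Rightarrow> real) set" where
  "chains K i = {f. \<forall>F. F \<notin> faces K i \<longrightarrow> f F = 0}"

text \<open>Simplicial boundary map C_i \<rightarrow> C_(i-1), simplices oriented by the linear order
on the vertices; the boundary of a 0-chain is 0 (unreduced homology).\<close>
fun boundary :: "'a::linorder set set \<Rightarrow> nat \<Rightarrow> ('a set \<Rightarrow> real) \<Rightarrow> ('a set \<Rightarrow> real)" where
  "boundary K 0 f = (\<lambda>G. 0)"
| "boundary K (Suc i) f = (\<lambda>G. if G \<in> faces K i then
      (\<Sum>v\<in>{v. v \<notin> G \<and> insert v G \<in> faces K (Suc i)}.
          (-1) ^ card {u\<in>G. u < v} * f (insert v G))
    else 0)"

abbreviation rdim :: "('a set \<Rightarrow> real) set \<Rightarrow> nat" where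
  "rdim S \<equiv> vector_space.dim (\<lambda>c f x. c * f x) S"

definition betti :: "'a::linorder set set \<Rightarrow> nat \<Rightarrow> nat" where
  "betti K r = rdim {f \<in> chains K r. boundary K r f = (\<lambda>G. 0)}
             - rdim (boundary K (Suc r) ` chains K (Suc r))"

definition up_neighbors :: "'a set set \<Rightarrow> nat \<Rightarrow> 'a set \<Rightarrow> 'a set set" where
  "up_neighbors K i F = {F' \<in> faces K i. F' \<noteq> F \<and> F \<union> F' \<in> faces K (Suc i)}"

definition signless_up_laplacian ::
  "'a set set \<Rightarrow> nat \<Rightarrow> ('a set \<Rightarrow> real) \<Rightarrow> ('a set \<Rightarrow> real)" where
  "signless_up_laplacian K i f = (\<lambda>F. if F \<in> faces K i then
      real (card {G \<in> faces K (Suc i). F \<subseteq> G}) * f F + (\<Sum>F'\<in>up_neighbors K i F. f F')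
    else 0)"

definition q_max :: "'a set set \<Rightarrow> nat \<Rightarrow> real" where
  "q_max K i = Max {\<mu>. \<exists>f\<in>chains K i. f \<noteq> (\<lambda>F. 0) \<and>
      signless_up_laplacian K i f = (\<lambda>F. \<mu> * f F)}"

end

theory Submission
  imports Defs "Jordan_Normal_Form.Spectral_Radius"
begin


interpretation fvs: vector_space "\<lambda>(c::real) (f::'b \<Rightarrow> real) x. c * f x"
  by unfold_locales (simp_all add: fun_eq_iff algebra_simps)

lemma sum_fun_eval:
  fixes h :: "'c \<Rightarrow> 'b \<Rightarrow> real"
  shows "(\<Sum>a\<in>A. h a) x = (\<Sum>a\<in>A. h a x)"
  by (induction A rule: infinite_finite_induct) (auto simp: zero_fun_def plus_fun_def)

lemma card_le_rdim:
  fixes E Z U :: "('b set \<Rightarrow> real) set"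
  assumes E: "finite E" and ZU: "Z \<subseteq> U" and UE: "U \<subseteq> fvs.span E" and Zi: "fvs.independent Z"
  shows "card Z \<le> rdim U"
proof -
  obtain B where B: "B \<subseteq> U" "fvs.independent B" "U \<subseteq> fvs.span B" "card B = rdim U"
    using fvs.basis_exists by blast
  have "finite B" using fvs.independent_span_bound[OF E B(2)] B(1) UE by blast
  moreover have "Z \<subseteq> fvs.span B" using ZU B(3) by blast
  ultimately have "card Z \<le> card B" using fvs.independent_span_bound[OF _ Zi] by blast
  thus ?thesis using B(4) by simp
qed

lemma chains_span:
  assumes "finite (faces K j)"
  shows "chains K j \<subseteq> fvs.span ((\<lambda>H G. if G = H then 1 else 0) ` faces K j)"
proof
  fix f assume f: "f \<in> chains K j"
  have "f = (\<Sum>H\<in>faces K j. (\<lambda>G. f H * (if G = H then 1 else 0)))"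
  proof
    fix G
    show "f G = (\<Sum>H\<in>faces K j. (\<lambda>G. f H * (if G = H then 1 else 0))) G"
      unfolding sum_fun_eval using f assms unfolding chains_def
      by (cases "G \<in> faces K j") (auto simp: if_distrib cong: if_cong)
  qed
  also have "\<dots> \<in> fvs.span ((\<lambda>H G. if G = H then 1 else 0) ` faces K j)"
    by (intro fvs.span_sum fvs.span_scale[where x="\<lambda>G. if G = _ then 1 else 0", simplified] fvs.span_base) auto
  finally show "f \<in> fvs.span ((\<lambda>H G. if G = H then 1 else 0) ` faces K j)" .
qed

lemma rdim_zero: "rdim {(\<lambda>G. 0) :: 'b set \<Rightarrow> real} = 0"
proof -
  have e: "{(\<lambda>G. 0) :: 'b set \<Rightarrow> real} = insert 0 {}" by (simp add: zero_fun_def)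
  have "fvs.span {} = fvs.span {(\<lambda>G. 0) :: 'b set \<Rightarrow> real}"
    unfolding e fvs.span_insert_0 ..
  from fvs.dim_eq_card[OF this fvs.independent_empty] show ?thesis by simp
qed

definition zc :: "'a::linorder set \<Rightarrow> 'a set \<Rightarrow> real" where
  "zc S H = (if H \<subseteq> S \<and> Suc (card H) = card S then (-1) ^ (\<Sum>x\<in>S - H. card {u\<in>S. u < x}) else 0)"

lemma zc_single:
  assumes "finite S" "x \<in> S"
  shows "zc S (S - {x}) = (-1) ^ card {u\<in>S. u < x}"
proof -
  have "S - (S - {x}) = {x}" using assms by auto
  moreover have "Suc (card (S - {x})) = card S" using card_Suc_Diff1[OF assms] .
  ultimately show ?thesis unfolding zc_def by simp
qed

lemma bd_zc:
  fixes K :: "'a::linorder set set"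
  assumes finS: "finite S" and cS: "card S = Suc (Suc (Suc i))"
    and allK: "\<And>H. H \<subseteq> S \<Longrightarrow> card H = Suc (Suc i) \<Longrightarrow> H \<in> K"
  shows "boundary K (Suc i) (zc S) = (\<lambda>G. 0)"
proof
  fix J
  define X where "X = {v. v \<notin> J \<and> insert v J \<in> faces K (Suc i)}"
  define t where "t v = (-1) ^ card {u\<in>J. u < v} * zc S (insert v J)" for v
  have bdJ: "boundary K (Suc i) (zc S) J = (if J \<in> faces K i then sum t X else 0)"
    unfolding X_def t_def by simp
  show "boundary K (Suc i) (zc S) J = 0"
  proof (cases "J \<in> faces K i \<and> J \<subseteq> S")
    case False
    show ?thesis
    proof (cases "J \<in> faces K i")
      case True
      with False have "\<not> J \<subseteq> S" by simp
      have "t v = 0" for v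
      proof -
        show ?thesis using \<open>\<not> J \<subseteq> S\<close> unfolding t_def zc_def by auto
      qed
      thus ?thesis using bdJ by simp
    qed (use bdJ in simp)
  next
    case True
    hence J: "J \<in> faces K i" "J \<subseteq> S" by auto
    have cJ: "card J = Suc i" using J unfolding faces_def by simp
    have finJ: "finite J" using J(2) finS finite_subset by blast
    have "card (S - J) = 2" using card_Diff_subset[OF finJ J(2)] cS cJ by simp
    then obtain x y where xy: "S - J = {x, y}" "x \<noteq> y" by (meson card_2_iff)
    define a where "a = min x y"
    define b where "b = max x y"
    have ab: "S - J = {a, b}" "a < b" using xy unfolding a_def b_def
      by (auto simp: min_def max_def)
    have aS: "a \<in> S" "a \<notin> J" "b \<in> S" "b \<notin> J" using ab by blast+
    have insa: "insert a J = S - {b}" using ab J(2) by blast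
    have insb: "insert b J = S - {a}" using ab J(2) by blast
    have ta: "t a = (-1) ^ card {u\<in>J. u < a} * (-1) ^ card {u\<in>S. u < b}"
      unfolding t_def insa using zc_single[OF finS aS(3)] by simp
    have tb: "t b = (-1) ^ card {u\<in>J. u < b} * (-1) ^ card {u\<in>S. u < a}"
      unfolding t_def insb using zc_single[OF finS aS(1)] by simp
    have e1: "{u\<in>S. u < b} = insert a {u\<in>J. u < b}" using ab aS J(2) by auto
    have e2: "{u\<in>S. u < a} = {u\<in>J. u < a}" using ab aS J(2) by auto
    have c1: "card {u\<in>S. u < b} = Suc (card {u\<in>J. u < b})"
      unfolding e1 using aS finJ by (simp add: card_insert_if)
    have tab: "t a + t b = 0" unfolding ta tb c1 e2 by simp
    show ?thesis
    proof (cases "finite X")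
      case False thus ?thesis using bdJ by simp
    next
      case finX: True
      have inX: "v \<in> X" if "v \<in> {a, b}" for v
      proof -
        have "v \<notin> J" "v \<in> S" using that aS by auto
        moreover have "card (insert v J) = Suc (Suc i)" using \<open>v \<notin> J\<close> finJ cJ by simp
        moreover have "insert v J \<subseteq> S" using \<open>v \<in> S\<close> J(2) by blast
        ultimately show ?thesis unfolding X_def faces_def using allK by auto
      qed
      have zero: "t v = 0" if "v \<in> X - {a, b}" for v
      proof -
        have "v \<notin> J" using that unfolding X_def by auto
        hence "v \<notin> S" using that ab by blast
        thus ?thesis unfolding t_def zc_def by auto
      qed
      have "sum t X = sum t {a, b}"
        by (rule sum.mono_neutral_right[OF finX]) (use inX zero in auto)
      also have "\<dots> = 0" using tab ab(2) by simp
      finally show ?thesis using bdJ by simp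
    qed
  qed
qed

definition qe :: "'a set set \<Rightarrow> nat \<Rightarrow> 'a set \<Rightarrow> 'a set \<Rightarrow> real" where
  "qe K i F F' = (if F = F' then real (card {G \<in> faces K (Suc i). F \<subseteq> G})
     else if F' \<in> up_neighbors K i F then 1 else 0)"

lemma qe_sym: "F \<in> faces K i \<Longrightarrow> F' \<in> faces K i \<Longrightarrow> qe K i F F' = qe K i F' F"
  unfolding qe_def up_neighbors_def by (auto simp: Un_commute)

lemma sul_qe:
  assumes fin: "finite (faces K i)" and F: "F \<in> faces K i"
  shows "signless_up_laplacian K i f F = (\<Sum>F'\<in>faces K i. qe K i F F' * f F')"
proof -
  have up: "up_neighbors K i F \<subseteq> faces K i - {F}" unfolding up_neighbors_def by auto
  have "(\<Sum>F'\<in>faces K i. qe K i F F' * f F') = qe K i F F * f F + (\<Sum>F'\<in>faces K i - {F}. qe K i F F' * f F')"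
    using fin F by (simp add: sum.remove)
  also have "(\<Sum>F'\<in>faces K i - {F}. qe K i F F' * f F') = (\<Sum>F'\<in>faces K i - {F}. if F' \<in> up_neighbors K i F then f F' else 0)"
    by (rule sum.cong, auto simp: qe_def)
  also have "\<dots> = (\<Sum>F'\<in>up_neighbors K i F. f F')"
    using fin up by (simp add: sum.If_cases Int_absorb1)
  finally show ?thesis using F unfolding signless_up_laplacian_def qe_def by simp
qed

context
  fixes V :: "'a::linorder set" and K :: "'a set set" and i :: nat
  assumes sc: "simplicial_complex V K" and pd: "pure_dim K (Suc i)"
begin

lemma finV: "finite V" using sc unfolding simplicial_complex_def by blast
lemma subV: "F \<in> K \<Longrightarrow> F \<subseteq> V" using sc unfolding simplicial_complex_def by blast
lemma closedK: "F \<in> K \<Longrightarrow> G \<subseteq> F \<Longrightarrow> G \<in> K" using sc unfolding simplicial_complex_def by blast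
lemma finK: "finite K"
proof -
  have "K \<subseteq> Pow V" using subV by blast
  moreover have "finite (Pow V)" using finV by simp
  ultimately show ?thesis by (rule finite_subset)
qed
lemma fin_faces: "finite (faces K j)" unfolding faces_def using finK by simp
lemma finF: assumes "F \<in> K" shows "finite F" using finite_subset[OF subV[OF assms] finV] .

lemma no_big: "faces K (Suc (Suc i)) = {}"
proof (rule ccontr)
  assume "faces K (Suc (Suc i)) \<noteq> {}"
  then obtain H where H: "H \<in> K" "card H = Suc (Suc (Suc i))" unfolding faces_def by auto
  let ?A = "{G\<in>K. H \<subseteq> G}"
  have fA: "finite ?A" using finK by simp
  have neA: "?A \<noteq> {}" using H by auto
  obtain m where m: "m \<in> ?A" "\<forall>b\<in>?A. m \<le> b \<longrightarrow> m = b"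
    using finite_has_maximal[OF fA neA] by (elim bexE) 
  have mK: "m \<in> K" "H \<subseteq> m" using m(1) by auto
  have "\<forall>G\<in>K. m \<subseteq> G \<longrightarrow> G = m"
  proof (intro ballI impI)
    fix G assume "G \<in> K" "m \<subseteq> G"
    hence "G \<in> ?A" using mK by auto
    thus "G = m" using m(2) \<open>m \<subseteq> G\<close> by (metis order_refl)
  qed
  hence "m \<in> facets K" unfolding facets_def using mK by simp
  hence "card m = Suc (Suc i)" using pd unfolding pure_dim_def by blast
  moreover have "card H \<le> card m" by (rule card_mono[OF finF[OF mK(1)] mK(2)])
  ultimately show False using H by simp
qed

lemma betti_eq: "betti K (Suc i) = rdim {f \<in> chains K (Suc i). boundary K (Suc i) f = (\<lambda>G. 0)}"
proof -
  have "boundary K (Suc (Suc i)) f = (\<lambda>G. 0)" for f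
    using no_big by (simp add: fun_eq_iff)
  moreover have "(\<lambda>G. 0) \<in> chains K (Suc (Suc i))" unfolding chains_def by simp
  ultimately have im: "boundary K (Suc (Suc i)) ` chains K (Suc (Suc i)) = {\<lambda>G. 0}" by auto
  show ?thesis unfolding betti_def im rdim_zero diff_zero ..
qed

lemma W_bound:
  assumes G0: "G0 \<in> faces K (Suc i)"
  shows "card {w\<in>V - G0. \<forall>F\<in>faces K i. F \<subseteq> G0 \<longrightarrow> insert w F \<in> K} \<le> betti K (Suc i)"
proof -
  define W where "W = {w\<in>V - G0. \<forall>F\<in>faces K i. F \<subseteq> G0 \<longrightarrow> insert w F \<in> K}"
  define ker where "ker = {f \<in> chains K (Suc i). boundary K (Suc i) f = (\<lambda>G. 0)}"
  have finW: "finite W" unfolding W_def using finV by simp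
  have G0K: "G0 \<in> K" and cG0: "card G0 = Suc (Suc i)" using G0 unfolding faces_def by auto
  have finG0: "finite G0" using G0K finF by blast
  have wG0: "w \<notin> G0" if "w \<in> W" for w using that unfolding W_def by auto
  have allK: "H \<in> K" if w: "w \<in> W" and H: "H \<subseteq> insert w G0" "card H = Suc (Suc i)" for w H
  proof (cases "w \<in> H")
    case True
    define F where "F = H - {w}"
    have finH: "finite H" using H(2) card_ge_0_finite by force
    have "F \<subseteq> G0" using H(1) unfolding F_def by blast
    moreover have "card F = Suc i" using H(2) True finH unfolding F_def by simp
    ultimately have "F \<in> faces K i" using closedK[OF G0K] unfolding faces_def by auto
    hence "insert w F \<in> K" using w \<open>F \<subseteq> G0\<close> unfolding W_def by blast
    moreover have "insert w F = H" using True unfolding F_def by blast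
    ultimately show ?thesis by simp
  next
    case False
    hence "H \<subseteq> G0" using H(1) by blast
    hence "H = G0" using card_subset_eq[OF finG0] H(2) cG0 by simp
    thus ?thesis using G0K by simp
  qed
  define z where "z w = zc (insert w G0)" for w
  have cS: "card (insert w G0) = Suc (Suc (Suc i))" if "w \<in> W" for w
    using wG0[OF that] finG0 cG0 by simp
  have zker: "z w \<in> ker" if w: "w \<in> W" for w
  proof -
    have "z w \<in> chains K (Suc i)" unfolding chains_def
    proof (intro CollectI allI impI)
      fix H assume H: "H \<notin> faces K (Suc i)"
      show "z w H = 0"
      proof (rule ccontr)
        assume "z w H \<noteq> 0"
        hence "H \<subseteq> insert w G0" "Suc (card H) = card (insert w G0)"
          unfolding z_def zc_def by (auto split: if_splits)
        hence "H \<subseteq> insert w G0" "card H = Suc (Suc i)" using cS[OF w] by auto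
        hence "H \<in> faces K (Suc i)" using allK[OF w] unfolding faces_def by auto
        thus False using H by simp
      qed
    qed
    moreover have "boundary K (Suc i) (z w) = (\<lambda>G. 0)"
      unfolding z_def by (rule bd_zc[OF _ cS[OF w] allK[OF w]]) (use finG0 in simp)
    ultimately show ?thesis unfolding ker_def by simp
  qed
  obtain x where x: "x \<in> G0" using cG0 by (metis card.empty ex_in_conv nat.distinct(1))
  define F0 where "F0 = G0 - {x}"
  have cF0: "card F0 = Suc i" using cG0 x finG0 unfolding F0_def by simp
  define Hw where "Hw w = insert w F0" for w
  have zH: "z w (Hw w) \<noteq> 0" if w: "w \<in> W" for w
  proof -
    have "Hw w \<subseteq> insert w G0" unfolding Hw_def F0_def by blast
    moreover have "Suc (card (Hw w)) = card (insert w G0)"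
      using cS[OF w] cF0 wG0[OF w] finG0 unfolding Hw_def F0_def by simp
    ultimately show ?thesis unfolding z_def zc_def by simp
  qed
  have zH0: "z w' (Hw w) = 0" if "w \<in> W" "w' \<in> W" "w \<noteq> w'" for w w'
  proof -
    have "\<not> Hw w \<subseteq> insert w' G0" using that wG0 unfolding Hw_def by blast
    thus ?thesis unfolding z_def zc_def by simp
  qed
  have inj: "inj_on z W"
  proof (rule inj_onI, rule ccontr)
    fix w w' assume A: "w \<in> W" "w' \<in> W" "z w = z w'" "w \<noteq> w'"
    have "z w' (Hw w) = 0" using zH0[OF A(1) A(2) A(4)] .
    moreover have "z w (Hw w) \<noteq> 0" using zH[OF A(1)] .
    ultimately show False using A(3) by simp
  qed
  have indep: "fvs.independent (z ` W)"
  proof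
    assume dep: "fvs.dependent (z ` W)"
    have "\<exists>u. (\<exists>v\<in>z ` W. u v \<noteq> 0) \<and> (\<Sum>v\<in>z ` W. (\<lambda>x. u v * v x)) = 0"
      using dep unfolding fvs.dependent_finite[OF finite_imageI[OF finW]] .
    then obtain u where u1: "\<exists>v\<in>z ` W. u v \<noteq> 0" and u2: "(\<Sum>v\<in>z ` W. (\<lambda>x. u v * v x)) = 0"
      by (elim exE conjE)
    then obtain w where w: "w \<in> W" "u (z w) \<noteq> 0" by blast
    have "(\<Sum>v\<in>z ` W. (\<lambda>x. u v * v x)) (Hw w) = (0 :: 'a set \<Rightarrow> real) (Hw w)" using fun_cong[OF u2, of "Hw w"] .
    hence s0: "(\<Sum>v\<in>z ` W. u v * v (Hw w)) = 0" unfolding sum_fun_eval zero_fun_def .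
    have "(\<Sum>v\<in>z ` W. u v * v (Hw w)) = u (z w) * z w (Hw w) + (\<Sum>v\<in>z ` W - {z w}. u v * v (Hw w))"
      by (rule sum.remove[OF finite_imageI[OF finW] imageI[OF w(1)]])
    also have "(\<Sum>v\<in>z ` W - {z w}. u v * v (Hw w)) = 0"
    proof (rule sum.neutral, rule ballI)
      fix v assume "v \<in> z ` W - {z w}"
      then obtain w' where "w' \<in> W" "v = z w'" "w' \<noteq> w" by auto
      thus "u v * v (Hw w) = 0" using zH0[OF w(1)] by simp
    qed
    finally show False using s0 w zH[OF w(1)] by simp
  qed
  have "card W = card (z ` W)" using inj by (simp add: card_image)
  also have "\<dots> \<le> rdim ker"
  proof (rule card_le_rdim[OF _ _ _ indep])
    show "finite ((\<lambda>H G. if G = H then 1 else 0) ` faces K (Suc i))" using fin_faces by simp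
    show "z ` W \<subseteq> ker" using zker by blast
    show "ker \<subseteq> fvs.span ((\<lambda>H G. if G = H then 1 else 0) ` faces K (Suc i))"
      using chains_span[OF fin_faces] unfolding ker_def by blast
  qed
  finally show ?thesis unfolding W_def ker_def betti_eq .
qed


lemma count_bound:
  assumes G0: "G0 \<in> faces K (Suc i)"
  shows "(\<Sum>F\<in>{F\<in>faces K i. F \<subseteq> G0}. card {G\<in>faces K (Suc i). F \<subseteq> G})
     \<le> Suc (Suc i) + Suc i * (card V - Suc (Suc i)) + card {w\<in>V - G0. \<forall>F\<in>faces K i. F \<subseteq> G0 \<longrightarrow> insert w F \<in> K}"
proof -
  define W where "W = {w\<in>V - G0. \<forall>F\<in>faces K i. F \<subseteq> G0 \<longrightarrow> insert w F \<in> K}"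
  define Fs where "Fs = {F\<in>faces K i. F \<subseteq> G0}"
  have G0K: "G0 \<in> K" and cG0: "card G0 = Suc (Suc i)" using G0 unfolding faces_def by auto
  have finG0: "finite G0" using finF[OF G0K] .
  have G0V: "G0 \<subseteq> V" using subV[OF G0K] .
  have finFs: "finite Fs" unfolding Fs_def using fin_faces by simp
  have finVG: "finite (V - G0)" using finV by simp
  have cFs: "card Fs \<le> Suc (Suc i)"
  proof -
    have "Fs \<subseteq> {B. B \<subseteq> G0 \<and> card B = Suc i}" unfolding Fs_def faces_def by auto
    hence "card Fs \<le> card {B. B \<subseteq> G0 \<and> card B = Suc i}"
      by (rule card_mono[rotated]) (simp add: finG0)
    also have "\<dots> = Suc (Suc i)" using n_subsets[OF finG0, of "Suc i"] cG0 by simp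
    finally show ?thesis .
  qed
  have step1: "card {G\<in>faces K (Suc i). F \<subseteq> G} \<le> Suc (card {w\<in>V - G0. insert w F \<in> K})"
    if F: "F \<in> Fs" for F
  proof -
    have FK: "F \<in> K" "card F = Suc i" "F \<subseteq> G0" using F unfolding Fs_def faces_def by auto
    have finF': "finite F" using finF[OF FK(1)] .
    have sub: "{G\<in>faces K (Suc i). F \<subseteq> G} \<subseteq> insert G0 ((\<lambda>w. insert w F) ` {w\<in>V - G0. insert w F \<in> K})"
    proof
      fix G assume "G \<in> {G\<in>faces K (Suc i). F \<subseteq> G}"
      hence G: "G \<in> K" "card G = Suc (Suc i)" "F \<subseteq> G" unfolding faces_def by auto
      have finG: "finite G" using finF[OF G(1)] .
      have "G - F \<noteq> {}"
      proof
        assume "G - F = {}"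
        hence "G \<subseteq> F" by blast
        hence "card G \<le> card F" using card_mono[OF finF'] by blast
        thus False using G(2) FK(2) by simp
      qed
      then obtain x where x: "x \<in> G" "x \<notin> F" by blast
      have "insert x F = G"
        by (rule card_seteq[OF finG]) (use x G FK finF' in auto)
      show "G \<in> insert G0 ((\<lambda>w. insert w F) ` {w\<in>V - G0. insert w F \<in> K})"
      proof (cases "x \<in> G0")
        case True
        hence "G \<subseteq> G0" using \<open>insert x F = G\<close> FK(3) by blast
        hence "G = G0" using card_subset_eq[OF finG0] G(2) cG0 by simp
        thus ?thesis by simp
      next
        case False
        have "x \<in> V" using subV[OF G(1)] x(1) by blast
        thus ?thesis using False \<open>insert x F = G\<close> G(1) by blast
      qed
    qed
    have "card {G\<in>faces K (Suc i). F \<subseteq> G} \<le> card (insert G0 ((\<lambda>w. insert w F) ` {w\<in>V - G0. insert w F \<in> K}))"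
      by (rule card_mono[OF _ sub]) (use finV in auto)
    also have "\<dots> \<le> Suc (card ((\<lambda>w. insert w F) ` {w\<in>V - G0. insert w F \<in> K}))"
      by (rule card_insert_le_m1) (simp_all add: finV)
    also have "\<dots> \<le> Suc (card {w\<in>V - G0. insert w F \<in> K})"
      by (intro Suc_le_mono[THEN iffD2] card_image_le) (use finV in auto)
    finally show ?thesis .
  qed
  have ind: "card {x\<in>A. P x} = (\<Sum>x\<in>A. if P x then 1 else 0)" if "finite A" for A :: "'b set" and P
    using sum.inter_filter[OF that, of "\<lambda>_. 1::nat" P] by simp
  have step2: "card {F\<in>Fs. insert w F \<in> K} \<le> Suc i + (if w \<in> W then 1 else 0)" if w: "w \<in> V - G0" for w
  proof (cases "w \<in> W")
    case True
    have "card {F\<in>Fs. insert w F \<in> K} \<le> card Fs" by (rule card_mono[OF finFs]) auto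
    thus ?thesis using cFs True by simp
  next
    case False
    then obtain F where F: "F \<in> Fs" "insert w F \<notin> K" using w unfolding W_def Fs_def by auto
    have "{F\<in>Fs. insert w F \<in> K} \<subset> Fs" using F by blast
    hence "card {F\<in>Fs. insert w F \<in> K} < card Fs" by (rule psubset_card_mono[OF finFs])
    thus ?thesis using cFs False by simp
  qed
  have "(\<Sum>F\<in>Fs. card {G\<in>faces K (Suc i). F \<subseteq> G}) \<le> (\<Sum>F\<in>Fs. Suc (card {w\<in>V - G0. insert w F \<in> K}))"
    by (rule sum_mono) (rule step1)
  also have "\<dots> = (\<Sum>F\<in>Fs. 1 + (\<Sum>w\<in>V - G0. if insert w F \<in> K then 1 else 0))"
    by (rule sum.cong[OF refl]) (simp only: ind[OF finVG] Suc_eq_plus1_left)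
  also have "\<dots> = card Fs + (\<Sum>F\<in>Fs. \<Sum>w\<in>V - G0. if insert w F \<in> K then 1 else 0)"
    by (simp only: sum.distrib card_eq_sum)
  also have "(\<Sum>F\<in>Fs. \<Sum>w\<in>V - G0. if insert w F \<in> K then 1 else 0) = (\<Sum>w\<in>V - G0. \<Sum>F\<in>Fs. if insert w F \<in> K then (1::nat) else 0)"
    by (rule sum.swap)
  also have "\<dots> = (\<Sum>w\<in>V - G0. card {F\<in>Fs. insert w F \<in> K})"
    by (simp add: ind[OF finFs])
  also have "\<dots> \<le> (\<Sum>w\<in>V - G0. Suc i + (if w \<in> W then 1 else 0))"
    by (rule sum_mono) (rule step2)
  also have "\<dots> = Suc i * card (V - G0) + card W"
  proof -
    have "W \<subseteq> V - G0" unfolding W_def by blast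
    hence "(\<Sum>w\<in>V - G0. if w \<in> W then 1 else 0) = card W"
    proof -
      have eqW: "{x\<in>V - G0. x \<in> W} = W" using \<open>W \<subseteq> V - G0\<close> by blast
      show ?thesis using ind[OF finVG, of "\<lambda>w. w \<in> W"] unfolding eqW by (rule sym)
    qed
    thus ?thesis unfolding sum.distrib by (simp add: mult.commute)
  qed
  also have "card (V - G0) = card V - Suc (Suc i)" using card_Diff_subset[OF finG0 G0V] cG0 by simp
  finally have "(\<Sum>F\<in>Fs. card {G\<in>faces K (Suc i). F \<subseteq> G}) \<le> card Fs + (Suc i * (card V - Suc (Suc i)) + card W)"
    by simp
  thus ?thesis using cFs unfolding Fs_def W_def by linarith
qed


lemma card_common:
  assumes F: "F \<in> faces K i" and F': "F' \<in> faces K i"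
  shows "real (card {G\<in>faces K (Suc i). F \<subseteq> G \<and> F' \<subseteq> G}) = qe K i F F'"
proof (cases "F = F'")
  case True thus ?thesis unfolding qe_def by simp
next
  case False
  have cF: "card F = Suc i" "card F' = Suc i" using F F' unfolding faces_def by auto
  have finFF: "finite F" "finite F'" using F F' finF unfolding faces_def by auto
  have eq: "{G\<in>faces K (Suc i). F \<subseteq> G \<and> F' \<subseteq> G} = (if F \<union> F' \<in> faces K (Suc i) then {F \<union> F'} else {})"
  proof -
    have "G = F \<union> F'" if G: "G \<in> faces K (Suc i)" "F \<subseteq> G" "F' \<subseteq> G" for G
    proof -
      have cG: "card G = Suc (Suc i)" and finG: "finite G" using G(1) finF unfolding faces_def by auto
      have "\<not> F' \<subseteq> F"
      proof
        assume "F' \<subseteq> F"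
        hence "F' = F" using card_subset_eq[OF finFF(1)] cF by simp
        thus False using False by simp
      qed
      then obtain x where x: "x \<in> F'" "x \<notin> F" by blast
      have "card (insert x F) \<le> card (F \<union> F')"
        by (rule card_mono) (use finFF x in auto)
      hence "Suc (Suc i) \<le> card (F \<union> F')" using x finFF cF by simp
      thus ?thesis using card_seteq[OF finG, of "F \<union> F'"] G cG by simp
    qed
    note this_eq = this
    show ?thesis
    proof (cases "F \<union> F' \<in> faces K (Suc i)")
      case True
      have "{G\<in>faces K (Suc i). F \<subseteq> G \<and> F' \<subseteq> G} = {F \<union> F'}"
      proof
        show "{G\<in>faces K (Suc i). F \<subseteq> G \<and> F' \<subseteq> G} \<subseteq> {F \<union> F'}"
          using this_eq by blast
        show "{F \<union> F'} \<subseteq> {G\<in>faces K (Suc i). F \<subseteq> G \<and> F' \<subseteq> G}" using True by blast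
      qed
      thus ?thesis using True by simp
    next
      case False
      have "{G\<in>faces K (Suc i). F \<subseteq> G \<and> F' \<subseteq> G} = {}"
      proof (rule equals0I)
        fix G assume "G \<in> {G\<in>faces K (Suc i). F \<subseteq> G \<and> F' \<subseteq> G}"
        hence "G = F \<union> F'" "G \<in> faces K (Suc i)" using this_eq by blast+
        thus False using False by simp
      qed
      thus ?thesis using False by simp
    qed
  qed
  have up: "(F' \<in> up_neighbors K i F) = (F \<union> F' \<in> faces K (Suc i))"
    unfolding up_neighbors_def using F' False by blast
  have qv: "qe K i F F' = (if F \<union> F' \<in> faces K (Suc i) then 1 else 0)"
    unfolding qe_def up using False by simp
  show ?thesis unfolding eq qv by simp
qed

lemma eig_bound:
  assumes f: "f \<in> chains K i" "f \<noteq> (\<lambda>F. 0)"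
    and eqf: "signless_up_laplacian K i f = (\<lambda>F. \<mu> * f F)"
  shows "\<mu> \<le> 0 \<or> (\<exists>G0\<in>faces K (Suc i).
     \<mu> \<le> real (\<Sum>F\<in>{F\<in>faces K i. F \<subseteq> G0}. card {G\<in>faces K (Suc i). F \<subseteq> G}))"
proof -
  define g where "g G = (\<Sum>F\<in>{F\<in>faces K i. F \<subseteq> G}. f F)" for G
  define D where "D F = {G\<in>faces K (Suc i). F \<subseteq> G}" for F
  have finI: "finite (faces K i)" and finS: "finite (faces K (Suc i))" using fin_faces by auto
  have claim1: "signless_up_laplacian K i f F = (\<Sum>G\<in>D F. g G)" if F: "F \<in> faces K i" for F
  proof -
    have "(\<Sum>G\<in>D F. g G) = (\<Sum>G\<in>faces K (Suc i). if F \<subseteq> G then g G else 0)"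
      unfolding D_def by (rule sum.inter_filter[OF finS])
    also have "\<dots> = (\<Sum>G\<in>faces K (Suc i). \<Sum>F'\<in>faces K i. if F \<subseteq> G \<and> F' \<subseteq> G then f F' else 0)"
    proof (rule sum.cong[OF refl])
      fix G
      have "g G = (\<Sum>F'\<in>faces K i. if F' \<subseteq> G then f F' else 0)"
        unfolding g_def by (rule sum.inter_filter[OF finI])
      thus "(if F \<subseteq> G then g G else 0) = (\<Sum>F'\<in>faces K i. if F \<subseteq> G \<and> F' \<subseteq> G then f F' else 0)"
        by (cases "F \<subseteq> G") auto
    qed
    also have "\<dots> = (\<Sum>F'\<in>faces K i. \<Sum>G\<in>faces K (Suc i). if F \<subseteq> G \<and> F' \<subseteq> G then f F' else 0)"
      by (rule sum.swap)
    also have "\<dots> = (\<Sum>F'\<in>faces K i. qe K i F F' * f F')"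
    proof (rule sum.cong[OF refl])
      fix F' assume F': "F' \<in> faces K i"
      have "(\<Sum>G\<in>faces K (Suc i). if F \<subseteq> G \<and> F' \<subseteq> G then f F' else 0)
          = (\<Sum>G\<in>{G\<in>faces K (Suc i). F \<subseteq> G \<and> F' \<subseteq> G}. f F')"
        by (rule sum.inter_filter[OF finS, symmetric])
      also have "\<dots> = real (card {G\<in>faces K (Suc i). F \<subseteq> G \<and> F' \<subseteq> G}) * f F'" by simp
      also have "\<dots> = qe K i F F' * f F'" using card_common[OF F F'] by simp
      finally show "(\<Sum>G\<in>faces K (Suc i). if F \<subseteq> G \<and> F' \<subseteq> G then f F' else 0) = qe K i F F' * f F'" .
    qed
    also have "\<dots> = signless_up_laplacian K i f F" using sul_qe[OF finI F] by simp
    finally show ?thesis by simp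
  qed
  have claim2: "\<mu> * g G = (\<Sum>F\<in>{F\<in>faces K i. F \<subseteq> G}. \<Sum>G'\<in>D F. g G')" for G
  proof -
    have "\<mu> * g G = (\<Sum>F\<in>{F\<in>faces K i. F \<subseteq> G}. \<mu> * f F)" unfolding g_def by (simp add: sum_distrib_left)
    also have "\<dots> = (\<Sum>F\<in>{F\<in>faces K i. F \<subseteq> G}. \<Sum>G'\<in>D F. g G')"
    proof (rule sum.cong[OF refl])
      fix F assume "F \<in> {F\<in>faces K i. F \<subseteq> G}"
      hence F: "F \<in> faces K i" by simp
      have "\<mu> * f F = signless_up_laplacian K i f F" using fun_cong[OF eqf, of F] by simp
      thus "\<mu> * f F = (\<Sum>G'\<in>D F. g G')" using claim1[OF F] by simp
    qed
    finally show ?thesis .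
  qed
  show ?thesis
  proof (cases "\<forall>G\<in>faces K (Suc i). g G = 0")
    case True
    obtain F where fF: "f F \<noteq> 0" using f(2) by auto
    hence F: "F \<in> faces K i" using f(1) unfolding chains_def by auto
    have "\<forall>G\<in>D F. g G = 0" using True unfolding D_def by auto
    hence "signless_up_laplacian K i f F = 0" using claim1[OF F] by simp
    hence "\<mu> * f F = 0" using fun_cong[OF eqf, of F] by simp
    hence "\<mu> = 0" using fF by simp
    thus ?thesis by simp
  next
    case False
    then obtain G1 where G1: "G1 \<in> faces K (Suc i)" "g G1 \<noteq> 0" by auto
    define Mx where "Mx = Max ((\<lambda>G. \<bar>g G\<bar>) ` faces K (Suc i))"
    have "Mx \<in> (\<lambda>G. \<bar>g G\<bar>) ` faces K (Suc i)" unfolding Mx_def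
      by (rule Max_in) (use finS G1 in auto)
    then obtain G0 where G0: "G0 \<in> faces K (Suc i)" "\<bar>g G0\<bar> = Mx" by auto
    have le: "\<bar>g G\<bar> \<le> \<bar>g G0\<bar>" if "G \<in> faces K (Suc i)" for G
      unfolding G0(2) Mx_def by (rule Max_ge) (use finS that in auto)
    have pos: "\<bar>g G0\<bar> > 0" using le[OF G1(1)] G1(2) by simp
    define N where "N = (\<Sum>F\<in>{F\<in>faces K i. F \<subseteq> G0}. card (D F))"
    have "\<bar>\<mu>\<bar> * \<bar>g G0\<bar> = \<bar>\<mu> * g G0\<bar>" by (simp add: abs_mult)
    also have "\<dots> = \<bar>\<Sum>F\<in>{F\<in>faces K i. F \<subseteq> G0}. \<Sum>G'\<in>D F. g G'\<bar>"
      by (simp only: claim2[of G0])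
    also have "\<dots> \<le> (\<Sum>F\<in>{F\<in>faces K i. F \<subseteq> G0}. \<bar>\<Sum>G'\<in>D F. g G'\<bar>)" by (rule sum_abs)
    also have "\<dots> \<le> (\<Sum>F\<in>{F\<in>faces K i. F \<subseteq> G0}. \<Sum>G'\<in>D F. \<bar>g G0\<bar>)"
    proof (rule sum_mono)
      fix F
      have "\<bar>\<Sum>G'\<in>D F. g G'\<bar> \<le> (\<Sum>G'\<in>D F. \<bar>g G'\<bar>)" by (rule sum_abs)
      also have "\<dots> \<le> (\<Sum>G'\<in>D F. \<bar>g G0\<bar>)" by (rule sum_mono) (use le in \<open>auto simp: D_def\<close>)
      finally show "\<bar>\<Sum>G'\<in>D F. g G'\<bar> \<le> (\<Sum>G'\<in>D F. \<bar>g G0\<bar>)" .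
    qed
    also have "\<dots> = real N * \<bar>g G0\<bar>" unfolding N_def by (simp add: sum_distrib_right)
    finally have "\<bar>\<mu>\<bar> * \<bar>g G0\<bar> \<le> real N * \<bar>g G0\<bar>" .
    hence "\<bar>\<mu>\<bar> \<le> real N" using pos by simp
    hence "\<mu> \<le> real N" by simp
    thus ?thesis using G0(1) unfolding N_def D_def by blast
  qed
qed

end



lemma real_sym_eigenvalue:
  fixes M :: "real mat"
  assumes M: "M \<in> carrier_mat m m" and m: "m > 0"
    and sym: "\<And>i j. i < m \<Longrightarrow> j < m \<Longrightarrow> M $$ (i,j) = M $$ (j,i)"
  shows "\<exists>\<mu>. eigenvalue M \<mu>"
proof -
  let ?Mc = "map_mat complex_of_real M"
  have Mc: "?Mc \<in> carrier_mat m m" using M by simp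
  from spectrum_non_empty[OF Mc m] obtain lam where "eigenvalue ?Mc lam"
    unfolding spectrum_def by auto
  then obtain v where v: "v \<in> carrier_vec m" "v \<noteq> 0\<^sub>v m" "?Mc *\<^sub>v v = lam \<cdot>\<^sub>v v"
    unfolding eigenvalue_def eigenvector_def using Mc by auto
  have comp: "(\<Sum>j\<in>{0..<m}. complex_of_real (M$$(i,j)) * v$j) = lam * v$i" if i: "i < m" for i
  proof -
    have "(?Mc *\<^sub>v v) $ i = lam * v$i" using v(3) i v(1) by (metis carrier_vecD index_smult_vec(1))
    moreover have "(?Mc *\<^sub>v v) $ i = (\<Sum>j\<in>{0..<m}. complex_of_real (M$$(i,j)) * v$j)"
      using i M v(1) by (simp add: scalar_prod_def)
    ultimately show ?thesis by simp
  qed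
  define s where "s = (\<Sum>i\<in>{0..<m}. cnj (v$i) * (\<Sum>j\<in>{0..<m}. complex_of_real (M$$(i,j)) * v$j))"
  define P where "P = (\<Sum>i\<in>{0..<m}. (cmod (v$i))^2)"
  have s1: "s = lam * complex_of_real P"
  proof -
    have "s = (\<Sum>i\<in>{0..<m}. lam * (cnj (v$i) * v$i))"
      unfolding s_def by (rule sum.cong, simp, subst comp, auto)
    also have "\<dots> = lam * complex_of_real P"
      unfolding P_def by (simp add: sum_distrib_left complex_mult_cnj mult.commute cmod_power2 sum.distrib distrib_left)
    finally show ?thesis .
  qed
  have s2: "cnj s = s"
  proof -
    have "cnj s = (\<Sum>i\<in>{0..<m}. \<Sum>j\<in>{0..<m}. v$i * complex_of_real (M$$(i,j)) * cnj (v$j))"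
      unfolding s_def by (simp add: sum_distrib_left mult.assoc)
    also have "\<dots> = (\<Sum>j\<in>{0..<m}. \<Sum>i\<in>{0..<m}. v$i * complex_of_real (M$$(i,j)) * cnj (v$j))"
      by (rule sum.swap)
    also have "\<dots> = s"
      unfolding s_def sum_distrib_left
      by (intro sum.cong refl, simp add: sym mult.commute mult.left_commute)
    finally show ?thesis .
  qed
  have "P > 0"
  proof -
    obtain i where i: "i < m" "v $ i \<noteq> 0" using v(1,2) by (metis carrier_vecD eq_vecI index_zero_vec(1,2))
    have "(cmod (v$i))^2 \<le> P" unfolding P_def
      by (rule member_le_sum, insert i, auto)
    moreover have "(cmod (v$i))^2 > 0" using i by simp
    ultimately show ?thesis by linarith
  qed
  have "Im lam = 0"
  proof -
    have "Im s = 0" using s2 by (metis cnj.simps(2) complex.expand minus_equation_iff neg_equal_zero cnj.simps(1))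
    hence "Im lam * P = 0" using s1 by simp
    thus ?thesis using \<open>P > 0\<close> by simp
  qed
  hence lamR: "lam = complex_of_real (Re lam)" by (simp add: complex_eq_iff)
  have cph: "char_poly ?Mc = map_poly complex_of_real (char_poly M)"
    by (rule of_real_hom.char_poly_hom[OF M])
  have "poly (char_poly ?Mc) lam = 0"
    using \<open>eigenvalue ?Mc lam\<close> eigenvalue_root_char_poly[OF Mc] by simp
  hence "poly (map_poly complex_of_real (char_poly M)) lam = 0"
    using of_real_hom.char_poly_hom[OF M] cph by (simp only:)
  hence "poly (map_poly complex_of_real (char_poly M)) (complex_of_real (Re lam)) = 0"
    using lamR by metis
  hence "poly (char_poly M) (Re lam) = 0"
    by (simp add: of_real_hom.poly_map_poly)
  thus ?thesis using eigenvalue_root_char_poly[OF M] by blast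
qed

lemma real_eigenvalues_finite:
  fixes M :: "real mat"
  assumes M: "M \<in> carrier_mat m m"
  shows "finite {\<mu>. eigenvalue M \<mu>}"
  using card_finite_spectrum(1)[OF M] unfolding spectrum_def by simp

lemma qmax_le:
  assumes fin: "finite (faces K i)" and ne: "faces K i \<noteq> {}"
  and bnd: "\<And>\<mu> f. f \<in> chains K i \<Longrightarrow> f \<noteq> (\<lambda>F. 0) \<Longrightarrow> signless_up_laplacian K i f = (\<lambda>F. \<mu> * f F) \<Longrightarrow> \<mu> \<le> b"
  shows "q_max K i \<le> b"
proof -
  obtain L where L: "distinct L" "set L = faces K i" using finite_distinct_list[OF fin] by metis
  define m where "m = length L"
  have m: "m > 0" using ne L unfolding m_def by auto
  define M where "M = mat m m (\<lambda>(a,b). qe K i (L!a) (L!b))"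
  have M: "M \<in> carrier_mat m m" unfolding M_def by simp
  have Lf: "L ! a \<in> faces K i" if "a < m" for a using that L unfolding m_def by auto
  have reidx: "(\<Sum>b\<in>{0..<m}. h (L!b)) = (\<Sum>F'\<in>faces K i. h F')" for h :: "'a set \<Rightarrow> real"
    using sum.reindex_bij_betw[OF bij_betw_nth[OF L(1) refl L(2)[symmetric]], of h] unfolding m_def
    by (simp add: atLeast0LessThan)
  have Mv: "(M *\<^sub>v v) $ a = (\<Sum>b\<in>{0..<m}. qe K i (L!a) (L!b) * v $ b)" if "a < m" "v \<in> carrier_vec m" for a v
    using that unfolding M_def by (simp add: scalar_prod_def)
  define S where "S = {\<mu>. \<exists>f\<in>chains K i. f \<noteq> (\<lambda>F. 0) \<and>
      signless_up_laplacian K i f = (\<lambda>F. \<mu> * f F)}"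
  have S1: "eigenvalue M \<mu>" if "\<mu> \<in> S" for \<mu>
  proof -
    from that obtain f where f: "f \<in> chains K i" "f \<noteq> (\<lambda>F. 0)" "signless_up_laplacian K i f = (\<lambda>F. \<mu> * f F)"
      unfolding S_def by auto
    define v where "v = vec m (\<lambda>a. f (L!a))"
    have v: "v \<in> carrier_vec m" unfolding v_def by simp
    obtain F where F: "f F \<noteq> 0" using f(2) by auto
    hence "F \<in> faces K i" using f(1) unfolding chains_def by auto
    then obtain a where a: "a < m" "L ! a = F" using L unfolding m_def by (metis in_set_conv_nth)
    have "v \<noteq> 0\<^sub>v m"
    proof
      assume "v = 0\<^sub>v m"
      hence "v $ a = 0" using a by simp
      thus False using a F unfolding v_def by simp
    qed
    moreover have "M *\<^sub>v v = \<mu> \<cdot>\<^sub>v v"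
    proof (rule eq_vecI)
      show "dim_vec (M *\<^sub>v v) = dim_vec (\<mu> \<cdot>\<^sub>v v)" using M v by simp
      fix c assume "c < dim_vec (\<mu> \<cdot>\<^sub>v v)"
      hence c: "c < m" using v by simp
      have "(M *\<^sub>v v) $ c = (\<Sum>b\<in>{0..<m}. qe K i (L!c) (L!b) * f (L!b))"
        using Mv[OF c v] by (simp add: v_def)
      also have "\<dots> = signless_up_laplacian K i f (L!c)"
        using reidx[of "\<lambda>F'. qe K i (L!c) F' * f F'"] sul_qe[OF fin Lf[OF c]] by simp
      also have "\<dots> = \<mu> * f (L!c)" using f(3) by simp
      finally show "(M *\<^sub>v v) $ c = (\<mu> \<cdot>\<^sub>v v) $ c" using c by (simp add: v_def)
    qed
    ultimately show ?thesis unfolding eigenvalue_def eigenvector_def using M v by auto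
  qed
  have S2: "\<mu> \<in> S" if "eigenvalue M \<mu>" for \<mu>
  proof -
    from that obtain v where v: "v \<in> carrier_vec m" "v \<noteq> 0\<^sub>v m" "M *\<^sub>v v = \<mu> \<cdot>\<^sub>v v"
      unfolding eigenvalue_def eigenvector_def using M by auto
    define f where "f = (\<lambda>F. if F \<in> set L then v $ (SOME a. a < m \<and> L ! a = F) else 0)"
    have fL: "f (L!b) = v $ b" if "b < m" for b
    proof -
      have "(SOME a. a < m \<and> L ! a = L ! b) = b"
        using that L(1) unfolding m_def by (auto simp: nth_eq_iff_index_eq)
      thus ?thesis using that unfolding f_def m_def by simp
    qed
    have "f \<in> chains K i" unfolding chains_def f_def using L by auto
    moreover have "f \<noteq> (\<lambda>F. 0)"
    proof
      assume f0: "f = (\<lambda>F. 0)"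
      have "v = 0\<^sub>v m"
      proof (rule eq_vecI)
        fix b assume "b < dim_vec (0\<^sub>v m)" hence "b < m" by simp
        thus "v $ b = 0\<^sub>v m $ b" using fL[of b] f0 by simp
      qed (use v in simp)
      thus False using v by simp
    qed
    moreover have "signless_up_laplacian K i f = (\<lambda>F. \<mu> * f F)"
    proof
      fix F
      show "signless_up_laplacian K i f F = \<mu> * f F"
      proof (cases "F \<in> faces K i")
        case True
        then obtain a where a: "a < m" "L ! a = F" using L unfolding m_def by (metis in_set_conv_nth)
        have "signless_up_laplacian K i f F = (\<Sum>F'\<in>faces K i. qe K i F F' * f F')"
          by (rule sul_qe[OF fin True])
        also have "\<dots> = (\<Sum>b\<in>{0..<m}. qe K i F (L!b) * f (L!b))"
          using reidx[of "\<lambda>F'. qe K i F F' * f F'"] by simp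
        also have "\<dots> = (\<Sum>b\<in>{0..<m}. qe K i (L!a) (L!b) * v $ b)"
          using a fL by (intro sum.cong) auto
        also have "\<dots> = (M *\<^sub>v v) $ a" using Mv[OF a(1) v(1)] by simp
        also have "\<dots> = \<mu> * v $ a" using v a by simp
        finally show ?thesis using fL[OF a(1)] a by simp
      next
        case False
        thus ?thesis unfolding signless_up_laplacian_def f_def using L by auto
      qed
    qed
    ultimately show ?thesis unfolding S_def by blast
  qed
  have sym: "M $$ (a,c) = M $$ (c,a)" if "a < m" "c < m" for a c
    using that qe_sym[OF Lf Lf] unfolding M_def by simp
  obtain \<mu>0 where "eigenvalue M \<mu>0" using real_sym_eigenvalue[OF M m sym] by blast
  hence Sne: "S \<noteq> {}" using S2 by blast
  have Sfin: "finite S" using real_eigenvalues_finite[OF M] S1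
    by (metis mem_Collect_eq rev_finite_subset subsetI)
  have "Max S \<in> S" using Max_in[OF Sfin Sne] .
  hence "Max S \<le> b" using bnd unfolding S_def by blast
  thus ?thesis unfolding q_max_def S_def by simp
qed

theorem mainTheorem11:
  fixes V :: "'a::linorder set" and K :: "'a set set" and n r t :: nat
  assumes "simplicial_complex V K" and "card V = n"
    and "r \<ge> 1" and "pure_dim K r"
    and "betti K r = t" and "1 \<le> t" and "int t \<le> int n - int r - 1"
  shows "q_max K (r - 1) \<le> real (r * n) - real r ^ 2 + real t + 1"
proof -
  note sc = assms(1)
  obtain i where ri: "r = Suc i" using assms(3) by (cases r) auto
  have pd: "pure_dim K (Suc i)" using assms(4) ri by simp
  have bt: "betti K (Suc i) = t" using assms(5) ri by simp
  obtain G where G: "G \<in> faces K (Suc i)" using pd unfolding pure_dim_def by blast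
  have GK: "G \<in> K" and cG: "card G = Suc (Suc i)" using G unfolding faces_def by auto
  have nG: "Suc (Suc i) \<le> n"
    using card_mono[OF finV[OF sc pd] subV[OF sc pd GK]] cG assms(2) by simp
  obtain x where x: "x \<in> G" using cG by (metis card.empty ex_in_conv nat.distinct(1))
  have "G - {x} \<in> faces K i"
    using closedK[OF sc pd GK, of "G - {x}"] cG x finF[OF sc pd GK] unfolding faces_def by auto
  hence ne: "faces K i \<noteq> {}" by blast
  define b where "b = real (r * n) - real r ^ 2 + real t + 1"
  have bpos: "0 \<le> b"
  proof -
    have "r \<le> n" using nG ri by simp
    hence "r * r \<le> r * n" by (rule mult_le_mono2)
    hence "real r ^ 2 \<le> real (r * n)" by (simp add: power2_eq_square flip: of_nat_mult)
    thus ?thesis unfolding b_def by simp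
  qed
  have Nb: "real (\<Sum>F\<in>{F\<in>faces K i. F \<subseteq> G0}. card {G\<in>faces K (Suc i). F \<subseteq> G}) \<le> b"
    if G0: "G0 \<in> faces K (Suc i)" for G0
  proof -
    have "(\<Sum>F\<in>{F\<in>faces K i. F \<subseteq> G0}. card {G\<in>faces K (Suc i). F \<subseteq> G})
        \<le> Suc (Suc i) + Suc i * (n - Suc (Suc i)) + t"
      using count_bound[OF sc pd G0, unfolded assms(2)] W_bound[OF sc pd G0] bt by linarith
    hence "real (\<Sum>F\<in>{F\<in>faces K i. F \<subseteq> G0}. card {G\<in>faces K (Suc i). F \<subseteq> G})
        \<le> real (Suc (Suc i) + Suc i * (n - Suc (Suc i)) + t)" by linarith
    also have "\<dots> = b"
    proof -
      have d: "real (n - Suc (Suc i)) = real n - real (Suc (Suc i))" using nG by (rule of_nat_diff)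
      have "real (Suc (Suc i) + Suc i * (n - Suc (Suc i)) + t)
          = real (Suc (Suc i)) + real (Suc i) * (real n - real (Suc (Suc i))) + real t"
        by (simp only: of_nat_add of_nat_mult d)
      thus ?thesis unfolding b_def ri by (simp add: algebra_simps power2_eq_square)
    qed
    finally show ?thesis .
  qed
  have "q_max K i \<le> b"
  proof (rule qmax_le[OF fin_faces[OF sc pd] ne])
    fix \<mu> f assume f: "f \<in> chains K i" "f \<noteq> (\<lambda>F. 0)" "signless_up_laplacian K i f = (\<lambda>F. \<mu> * f F)"
    from eig_bound[OF sc pd f] show "\<mu> \<le> b" using bpos Nb by force
  qed
  thus ?thesis unfolding b_def using ri by simp
qed

end
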